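(* Let $\alpha\ge1$. If $P_1,P_2\in\hat E_+$ satisfy the condition $A_\alpha$ for orders $(k_1,l_1)$ and $(k_2,l_2)$ respectively, then $P_1P_2$ satisfies $A_\alpha$ for order $(k_1+k_2,l_1+l_2)$. In particular, if $P_1,P_2$ satisfy $A_\alpha$, then $P_1P_2$ satisfies $A_\alpha$ and $\mathrm{ord}_\Gamma(P_1P_2)=\mathrm{ord}_\Gamma(P_1)+\mathrm{ord}_\Gamma(P_2)$. The same statements hold for $P_1,P_2\in E_+$ with the strong condition $B_\alpha$ in place of $A_\alpha$.
   Context: $k$ is a field of characteristic zero, $R=k[[x_1,x_2]]$, $M=(x_1,x_2)$, $\mathrm{ord}_M(a)=\sup\{n:a\in M^n\}$, $\partial_i=\partial/\partial x_i$. $\hat D_1$: formal series $\sum_{q\ge0}a_q\partial_1^q$, $a_q\in R$, $\mathrm{ord}_M(a_q)\to\infty$; $\hat E_+=\hat D_1((\partial_2^{-1}))$ (Laurent series in $\partial_2^{-1}$, coefficients on the left, Leibniz-rule multiplication); $E_+=R[\partial_1]((\partial_2^{-1}))$. Every $P\in\hat E_+$ is uniquely $P=\sum p_{ij}\partial_1^i\partial_2^j$, $p_{ij}\in R$. $P$ has $\Gamma$-order $\mathrm{ord}_\Gamma(P)=(k,l)$ if $P=\sum_{s\le l}p_s\partial_2^s$ with $p_s\in\hat D_1$, $p_l\in R[\partial_1]$ of $\partial_1$-order $k$. $P$ satisfies $A_\alpha$ for order $(k,l)$ if $\mathrm{ord}_M(p_{ij})\ge i-\alpha(l-j)-k$ whenever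 $i>\alpha(l-j)+k$; $P$ satisfies $A_\alpha$ if it does so for $(k,l)=\mathrm{ord}_\Gamma(P)$. $P\in E_+$ satisfies the strong condition $B_\alpha$ for order $(k,l)$ if $p_{ij}=0$ whenever $i>\alpha(l-j)+k$, and $B_\alpha$ if this holds for $(k,l)=\mathrm{ord}_\Gamma(P)$. *)

theory Defs
  imports Complex_Main "HOL-Library.Extended_Nat"
begin

text \<open>A formal power series in two variables is represented by its coefficient
function: f (a,b) is the coefficient of x1^a x2^b.\<close>
type_synonym 'k ser = "nat \<times> nat \<Rightarrow> 'k"

definition ser_mult :: "'k::comm_ring_1 ser \<Rightarrow> 'k ser \<Rightarrow> 'k ser" where
  "ser_mult f g = (\<lambda>(a,b). \<Sum>c\<le>a. \<Sum>d\<le>b. f (c,d) * g (a - c, b - d))"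

text \<open>ser_deriv m n f is the derivative of f taken m times in x1 and n times in x2.\<close>
definition ser_deriv :: "nat \<Rightarrow> nat \<Rightarrow> 'k::comm_ring_1 ser \<Rightarrow> 'k ser" where
  "ser_deriv m n f = (\<lambda>(a,b). of_nat (pochhammer (a+1) m * pochhammer (b+1) n) * f (a+m, b+n))"

definition in_Mpow :: "'k::zero ser \<Rightarrow> nat \<Rightarrow> bool" where
  "in_Mpow f n \<longleftrightarrow> (\<forall>a b. a + b < n \<longrightarrow> f (a,b) = 0)"

definition ser_ord :: "'k::zero ser \<Rightarrow> enat" where
  "ser_ord f = Sup {enat n | n. in_Mpow f n}"

text \<open>Sum of a family of series which is locally finite coefficientwise (every
family arising below is, for inputs in hat E_+).\<close>
definition ser_sum :: "('i \<Rightarrow> 'k::comm_monoid_add ser) \<Rightarrow> 'k ser" where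
  "ser_sum F = (\<lambda>x. \<Sum>t\<in>{t. F t x \<noteq> 0}. F t x)"

text \<open>An operator P = sum p_ij d1^i d2^j is represented by its coefficients:
P i j = p_ij in R, i :: nat, j :: int.\<close>
type_synonym 'k op = "nat \<Rightarrow> int \<Rightarrow> 'k ser"

definition hatE :: "'k::zero op \<Rightarrow> bool" where
  "hatE P \<longleftrightarrow> (\<exists>L. \<forall>i j. j > L \<longrightarrow> P i j = (\<lambda>_. 0))
     \<and> (\<forall>j N. \<exists>I0. \<forall>i\<ge>I0. enat N \<le> ser_ord (P i j))"

definition Eplus :: "'k::zero op \<Rightarrow> bool" where
  "Eplus P \<longleftrightarrow> (\<exists>L. \<forall>i j. j > L \<longrightarrow> P i j = (\<lambda>_. 0))
     \<and> (\<forall>j. finite {i. P i j \<noteq> (\<lambda>_. 0)})"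

text \<open>Multiplication by the Leibniz rule:
 (a d1^i d2^j)(b d1^i' d2^j') = sum_{m\<le>i, n\<ge>0} C(i,m) C(j,n) a (d1^m d2^n b) d1^(i-m+i') d2^(j-n+j'),
 with the generalized binomial coefficient C(j,n) for j an integer.\<close>
definition op_mult :: "'k::field_char_0 op \<Rightarrow> 'k op \<Rightarrow> 'k op" where
  "op_mult P Q = (\<lambda>I J. ser_sum (\<lambda>(i, m, j, n) x.
      if m \<le> i \<and> i - m \<le> I then
        of_nat (i choose m) * ((of_int j :: 'k) gchoose n) *
        ser_mult (P i j) (ser_deriv m n (Q (I + m - i) (J - j + int n))) x
      else 0))"

text \<open>Gamma-order: P = sum_{s\<le>l} p_s d2^s with p_l in R[d1] of d1-order k.\<close>
definition is_gamma_ord :: "'k::zero op \<Rightarrow> nat \<Rightarrow> int \<Rightarrow> bool" where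
  "is_gamma_ord P k l \<longleftrightarrow> (\<forall>i j. j > l \<longrightarrow> P i j = (\<lambda>_. 0))
     \<and> (\<forall>i. i > k \<longrightarrow> P i l = (\<lambda>_. 0)) \<and> P k l \<noteq> (\<lambda>_. 0)"

definition condA :: "real \<Rightarrow> 'k::zero op \<Rightarrow> nat \<Rightarrow> int \<Rightarrow> bool" where
  "condA \<alpha> P k l \<longleftrightarrow> (\<forall>i j. real i > \<alpha> * real_of_int (l - j) + real k \<longrightarrow>
      (case ser_ord (P i j) of
         enat n \<Rightarrow> real n \<ge> real i - \<alpha> * real_of_int (l - j) - real k
       | \<infinity> \<Rightarrow> True))"

definition condB :: "real \<Rightarrow> 'k::zero op \<Rightarrow> nat \<Rightarrow> int \<Rightarrow> bool" where
  "condB \<alpha> P k l \<longleftrightarrow> (\<forall>i j. real i > \<alpha> * real_of_int (l - j) + real k \<longrightarrow> P i j = (\<lambda>_. 0))"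

end

theory Submission
  imports Defs
begin


lemma in_Mpow_mono: "in_Mpow f n \<Longrightarrow> m \<le> n \<Longrightarrow> in_Mpow f m"
  unfolding in_Mpow_def by auto

lemma ord_enat: assumes "ser_ord f = enat n" shows "in_Mpow f n"
proof -
  let ?A = "{enat n | n. in_Mpow f n}"
  have ne: "?A \<noteq> {}" proof -
    have "enat 0 \<in> ?A" by (auto simp: in_Mpow_def)
    then show ?thesis by blast
  qed
  have fin: "finite ?A"
  proof (rule ccontr)
    assume "\<not> finite ?A" then have "Sup ?A = \<infinity>" using ne by (simp add: Sup_enat_def)
    then show False using assms by (simp add: ser_ord_def)
  qed
  have "Max ?A \<in> ?A" using fin ne by (rule Max_in)
  moreover have "Max ?A = enat n"
  proof -
    have "Sup ?A = Max ?A" using fin ne unfolding Sup_enat_def by (simp only: if_False if_True)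
    then show ?thesis using assms by (simp add: ser_ord_def)
  qed
  ultimately show ?thesis by auto
qed

lemma ord_inf: assumes "ser_ord f = \<infinity>" shows "f (a,b) = 0"
proof -
  let ?A = "{enat n | n. in_Mpow f n}"
  have ne: "?A \<noteq> {}" proof -
    have "enat 0 \<in> ?A" by (auto simp: in_Mpow_def)
    then show ?thesis by blast
  qed
  have "\<not> finite ?A"
  proof
    assume fin: "finite ?A"
    have "Max ?A \<in> ?A" using fin ne by (rule Max_in)
    moreover have "Max ?A = \<infinity>"
    proof -
      have "Sup ?A = Max ?A" using fin ne unfolding Sup_enat_def by (simp only: if_False if_True)
      then show ?thesis using assms by (simp add: ser_ord_def)
    qed
    ultimately show False by auto
  qed
  then have "\<not> (\<forall>x\<in>?A. x \<le> enat (a+b))" using finite_enat_bounded by blast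
  then obtain n where "in_Mpow f n" "a + b < n" by (auto simp: not_le)
  then show ?thesis unfolding in_Mpow_def by auto
qed

lemma ord_iff: "(case ser_ord f of enat n \<Rightarrow> real n \<ge> t | \<infinity> \<Rightarrow> True)
   \<longleftrightarrow> (\<forall>a b. real (a+b) < t \<longrightarrow> f (a,b) = 0)"
proof
  assume h: "(case ser_ord f of enat n \<Rightarrow> real n \<ge> t | \<infinity> \<Rightarrow> True)"
  show "\<forall>a b. real (a+b) < t \<longrightarrow> f (a,b) = 0"
  proof (cases "ser_ord f")
    case (enat n)
    then show ?thesis using h ord_enat[OF enat] unfolding in_Mpow_def by auto
  next
    case infinity then show ?thesis using ord_inf by blast
  qed
next
  assume h: "\<forall>a b. real (a+b) < t \<longrightarrow> f (a,b) = 0"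
  have "in_Mpow f (nat \<lceil>t\<rceil>)" unfolding in_Mpow_def using h
    by (metis less_ceiling_iff of_int_of_nat_eq of_nat_less_iff zless_nat_eq_int_zless)
  then have "enat (nat \<lceil>t\<rceil>) \<le> ser_ord f" unfolding ser_ord_def by (auto intro: Sup_upper)
  then show "(case ser_ord f of enat n \<Rightarrow> real n \<ge> t | \<infinity> \<Rightarrow> True)"
  proof (cases "ser_ord f")
    case (enat n)
    then have "nat \<lceil>t\<rceil> \<le> n" using \<open>enat (nat \<lceil>t\<rceil>) \<le> ser_ord f\<close> by simp
    then have "t \<le> real n" by linarith
    then show ?thesis using enat by simp
  qed simp
qed

lemma sum_single:
  assumes "finite A" "x \<in> A" "\<And>y. y \<in> A \<Longrightarrow> y \<noteq> x \<Longrightarrow> g y = 0"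
  shows "sum g A = g x"
proof -
  have "sum g A = g x + sum g (A - {x})" using assms by (simp add: sum.remove)
  moreover have "sum g (A - {x}) = 0" using assms by (intro sum.neutral) auto
  ultimately show ?thesis by simp
qed

lemma least_pair:
  fixes f :: "'k::zero ser"
  assumes "f \<noteq> (\<lambda>_. 0)"
  shows "\<exists>a0 b0. f (a0,b0) \<noteq> 0 \<and> (\<forall>c d. f (c,d) \<noteq> 0 \<longrightarrow> a0 \<le> c)
     \<and> (\<forall>d. f (a0,d) \<noteq> 0 \<longrightarrow> b0 \<le> d)"
proof -
  from assms obtain a b where ab: "f (a,b) \<noteq> 0" by (metis ext surj_pair)
  define a0 where "a0 = (LEAST a. \<exists>b. f (a,b) \<noteq> 0)"
  have ex: "\<exists>b. f (a0,b) \<noteq> 0" unfolding a0_def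
    by (rule LeastI_ex[of "\<lambda>a. \<exists>b. f (a,b) \<noteq> 0"]) (use ab in blast)
  define b0 where "b0 = (LEAST b. f (a0,b) \<noteq> 0)"
  have "f (a0,b0) \<noteq> 0" unfolding b0_def using ex by (rule LeastI_ex)
  moreover have "\<forall>c d. f (c,d) \<noteq> 0 \<longrightarrow> a0 \<le> c" unfolding a0_def by (auto intro: Least_le)
  moreover have "\<forall>d. f (a0,d) \<noteq> 0 \<longrightarrow> b0 \<le> d" unfolding b0_def by (auto intro: Least_le)
  ultimately show ?thesis by blast
qed

lemma ser_mult_nz:
  fixes f g :: "'k::idom ser"
  assumes "f \<noteq> (\<lambda>_. 0)" "g \<noteq> (\<lambda>_. 0)"
  shows "\<exists>x. ser_mult f g x \<noteq> 0"
proof -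
  obtain a0 b0 where f0: "f (a0,b0) \<noteq> 0" and fa: "\<And>c d. f (c,d) \<noteq> 0 \<Longrightarrow> a0 \<le> c"
     and fb: "\<And>d. f (a0,d) \<noteq> 0 \<Longrightarrow> b0 \<le> d" using least_pair[OF assms(1)] by blast
  obtain a1 b1 where g0: "g (a1,b1) \<noteq> 0" and ga: "\<And>c d. g (c,d) \<noteq> 0 \<Longrightarrow> a1 \<le> c"
     and gb: "\<And>d. g (a1,d) \<noteq> 0 \<Longrightarrow> b1 \<le> d" using least_pair[OF assms(2)] by blast
  have "ser_mult f g (a0+a1, b0+b1) = (\<Sum>c\<le>a0+a1. \<Sum>d\<le>b0+b1. f (c,d) * g (a0+a1 - c, b0+b1 - d))"
    by (simp add: ser_mult_def)
  also have "\<dots> = (\<Sum>d\<le>b0+b1. f (a0,d) * g (a0+a1 - a0, b0+b1 - d))"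
  proof (rule sum_single)
    fix c assume c: "c \<in> {..a0+a1}" "c \<noteq> a0"
    show "(\<Sum>d\<le>b0+b1. f (c,d) * g (a0+a1 - c, b0+b1 - d)) = 0"
    proof (rule sum.neutral, rule ballI)
      fix d
      show "f (c,d) * g (a0+a1 - c, b0+b1 - d) = 0"
      proof (cases "f (c,d) = 0")
        case False
        then have "a0 < c" using fa c by force
        then have "\<not> a1 \<le> a0+a1-c" using c(1) by auto
        then have "g (a0+a1 - c, b0+b1 - d) = 0" using ga[of "a0+a1-c" "b0+b1-d"] by blast
        then show ?thesis by simp
      qed simp
    qed
  qed auto
  also have "\<dots> = f (a0,b0) * g (a1, b1)"
  proof (subst sum_single[where x=b0])
    fix d assume d: "d \<in> {..b0+b1}" "d \<noteq> b0"
    show "f (a0,d) * g (a0+a1 - a0, b0+b1 - d) = 0"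
    proof (cases "f (a0,d) = 0")
      case False
      then have "b0 < d" using fb d by force
      then have "\<not> b1 \<le> b0+b1-d" using d(1) by auto
      then have "g (a1, b0+b1 - d) = 0" using gb[of "b0+b1-d"] by blast
      then show ?thesis by simp
    qed simp
  qed auto
  finally have "ser_mult f g (a0+a1, b0+b1) = f (a0,b0) * g (a1, b1)" .
  then have "ser_mult f g (a0+a1, b0+b1) \<noteq> 0" using f0 g0 by simp
  then show ?thesis by blast
qed

definition mterm :: "'k::field_char_0 op \<Rightarrow> 'k op \<Rightarrow> nat \<Rightarrow> int \<Rightarrow> nat \<times> nat \<times> int \<times> nat \<Rightarrow> 'k ser" where
  "mterm P Q I J = (\<lambda>(i, m, j, n) x.
      if m \<le> i \<and> i - m \<le> I then
        of_nat (i choose m) * ((of_int j :: 'k) gchoose n) *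
        ser_mult (P i j) (ser_deriv m n (Q (I + m - i) (J - j + int n))) x
      else 0)"

lemma op_mult_eq: "op_mult P Q I J = ser_sum (mterm P Q I J)"
  unfolding op_mult_def mterm_def ..

lemma ser_sum_nz: "ser_sum F x \<noteq> 0 \<Longrightarrow> \<exists>t. F t x \<noteq> 0"
  unfolding ser_sum_def by (metis (mono_tags, lifting) empty_Collect_eq sum.empty)

lemma term_nz:
  assumes "mterm P Q I J (i,m,j,n) (a,b) \<noteq> 0"
  shows "m \<le> i \<and> i - m \<le> I \<and> (\<exists>c d. c \<le> a \<and> d \<le> b \<and> P i j (c,d) \<noteq> 0
          \<and> Q (I+m-i) (J-j+int n) (a-c+m, b-d+n) \<noteq> 0)"
proof -
  have c: "m \<le> i \<and> i - m \<le> I" using assms by (auto simp: mterm_def split: if_splits)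
  then have "ser_mult (P i j) (ser_deriv m n (Q (I + m - i) (J - j + int n))) (a,b) \<noteq> 0"
    using assms by (auto simp: mterm_def)
  then obtain c d where cd: "c \<le> a" "d \<le> b" and nz: "P i j (c,d) * ser_deriv m n (Q (I + m - i) (J - j + int n)) (a-c,b-d) \<noteq> 0"
    unfolding ser_mult_def by (auto elim!: sum.not_neutral_contains_not_neutral)
  have "P i j (c,d) \<noteq> 0" using nz by auto
  moreover have "Q (I+m-i) (J-j+int n) (a-c+m, b-d+n) \<noteq> 0"
    using nz by (auto simp: ser_deriv_def)
  ultimately show ?thesis using c cd by blast
qed

lemma op_nz:
  assumes "op_mult P Q I J (a,b) \<noteq> 0"
  obtains i m j n c d where "m \<le> i" "i - m \<le> I" "c \<le> a" "d \<le> b" "P i j (c,d) \<noteq> 0"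
     "Q (I+m-i) (J-j+int n) (a-c+m, b-d+n) \<noteq> 0"
proof -
  obtain t where "mterm P Q I J t (a,b) \<noteq> 0" using assms ser_sum_nz by (metis op_mult_eq)
  moreover obtain i m j n where "t = (i,m,j,n)" by (cases t) auto
  ultimately show ?thesis using term_nz that by blast
qed

lemma condA_D:
  assumes "condA \<alpha> P k l" "P i j (c,d) \<noteq> 0"
  shows "real (c+d) \<ge> real i - \<alpha> * real_of_int (l - j) - real k"
proof (cases "real i > \<alpha> * real_of_int (l - j) + real k")
  case True
  then have "(case ser_ord (P i j) of enat n \<Rightarrow> real n \<ge> real i - \<alpha> * real_of_int (l - j) - real k
       | \<infinity> \<Rightarrow> True)" using assms(1) unfolding condA_def by blast
  then show ?thesis using assms(2) unfolding ord_iff by (meson not_le)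
next
  case False then show ?thesis by simp
qed

lemma condA_I:
  assumes "\<And>i j a b. real (a+b) < real i - \<alpha> * real_of_int (l - j) - real k \<Longrightarrow> P i j (a,b) = 0"
  shows "condA \<alpha> P k l"
  unfolding condA_def ord_iff using assms by blast

lemma arA:
  fixes s I A k1 k2 i A1 cd A2 m n an :: real
  assumes "s < I - A - k1 - k2" "i - A1 - k1 \<le> cd" "I + m - i - A2 - k2 \<le> s - cd + m + n"
    "A2 = A - A1 - an" "n \<le> an"
  shows False using assms by linarith

lemma arB:
  fixes I A k1 k2 i A1 A2 m n an :: real
  assumes "A + k1 + k2 < I" "i \<le> A1 + k1" "I + m - i \<le> A2 + k2"
    "A2 = A - A1 - an" "0 \<le> an" "0 \<le> m"
  shows False using assms by linarith

lemma prodA: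
  fixes P Q :: "'k::field_char_0 op"
  assumes al: "\<alpha> \<ge> 1" and A1: "condA \<alpha> P k1 l1" and A2: "condA \<alpha> Q k2 l2"
  shows "condA \<alpha> (op_mult P Q) (k1+k2) (l1+l2)"
proof (rule condA_I, rule ccontr)
  fix I J a b
  assume lt: "real (a+b) < real I - \<alpha> * real_of_int (l1 + l2 - J) - real (k1+k2)"
    and nz: "op_mult P Q I J (a,b) \<noteq> 0"
  from nz obtain i m j n c d where h: "m \<le> i" "i - m \<le> I" "c \<le> a" "d \<le> b" "P i j (c,d) \<noteq> 0"
     "Q (I+m-i) (J-j+int n) (a-c+m, b-d+n) \<noteq> 0" by (rule op_nz)
  have e1: "real (c+d) \<ge> real i - \<alpha> * real_of_int (l1 - j) - real k1" using condA_D[OF A1 h(5)] .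
  have e2: "real ((a-c+m)+(b-d+n)) \<ge> real (I+m-i) - \<alpha> * real_of_int (l2 - (J-j+int n)) - real k2"
    using condA_D[OF A2 h(6)] .
  have r1: "real ((a-c+m)+(b-d+n)) = real a - real c + real m + real b - real d + real n"
    using h by (simp add: of_nat_diff)
  have r2: "real (I+m-i) = real I + real m - real i" using h by (simp add: of_nat_diff)
  have r3: "\<alpha> * real_of_int (l2 - (J-j+int n)) = \<alpha> * real_of_int l2 - \<alpha> * real_of_int J + \<alpha> * real_of_int j - \<alpha> * real n"
    by (simp add: algebra_simps)
  have r4: "\<alpha> * real_of_int (l1 - j) = \<alpha> * real_of_int l1 - \<alpha> * real_of_int j" by (simp add: algebra_simps)
  have r5: "\<alpha> * real_of_int (l1 + l2 - J) = \<alpha> * real_of_int l1 + \<alpha> * real_of_int l2 - \<alpha> * real_of_int J"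
    by (simp add: algebra_simps)
  have an: "\<alpha> * real n \<ge> real n" using al by (simp add: mult_right_mono[of 1 \<alpha> "real n", simplified])
  show False
  proof (rule arA)
    show "real (a+b) < real I - \<alpha> * real_of_int (l1 + l2 - J) - real k1 - real k2" using lt by simp
    show "real i - \<alpha> * real_of_int (l1 - j) - real k1 \<le> real (c+d)" using e1 .
    show "real I + real m - real i - \<alpha> * real_of_int (l2 - (J-j+int n)) - real k2 \<le> real (a+b) - real (c+d) + real m + real n"
      using e2 r1 r2 by simp
    show "\<alpha> * real_of_int (l2 - (J-j+int n)) = \<alpha> * real_of_int (l1 + l2 - J) - \<alpha> * real_of_int (l1 - j) - \<alpha> * real n"
      by (simp add: algebra_simps)
  qed (rule an)
qed

lemma condB_D:
  assumes "condB \<alpha> P k l" "P i j (c,d) \<noteq> 0"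
  shows "real i \<le> \<alpha> * real_of_int (l - j) + real k"
  using assms unfolding condB_def by (metis not_le)

lemma prodB:
  fixes P Q :: "'k::field_char_0 op"
  assumes al: "\<alpha> \<ge> 1" and B1: "condB \<alpha> P k1 l1" and B2: "condB \<alpha> Q k2 l2"
  shows "condB \<alpha> (op_mult P Q) (k1+k2) (l1+l2)"
  unfolding condB_def
proof (intro allI impI ext)
  fix I J and x :: "nat \<times> nat"
  assume gt: "real I > \<alpha> * real_of_int (l1 + l2 - J) + real (k1+k2)"
  obtain a b where x: "x = (a,b)" by (cases x)
  show "op_mult P Q I J x = 0"
  proof (rule ccontr)
    assume "op_mult P Q I J x \<noteq> 0"
    then obtain i m j n c d where h: "m \<le> i" "i - m \<le> I" "c \<le> a" "d \<le> b" "P i j (c,d) \<noteq> 0"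
       "Q (I+m-i) (J-j+int n) (a-c+m, b-d+n) \<noteq> 0" using x op_nz by metis
    have e1: "real i \<le> \<alpha> * real_of_int (l1 - j) + real k1" using condB_D[OF B1 h(5)] .
    have e2: "real (I+m-i) \<le> \<alpha> * real_of_int (l2 - (J-j+int n)) + real k2"
      using condB_D[OF B2 h(6)] .
    have r2: "real (I+m-i) = real I + real m - real i" using h by (simp add: of_nat_diff)
    have r3: "\<alpha> * real_of_int (l2 - (J-j+int n)) = \<alpha> * real_of_int l2 - \<alpha> * real_of_int J + \<alpha> * real_of_int j - \<alpha> * real n"
      by (simp add: algebra_simps)
    have r4: "\<alpha> * real_of_int (l1 - j) = \<alpha> * real_of_int l1 - \<alpha> * real_of_int j" by (simp add: algebra_simps)
    have r5: "\<alpha> * real_of_int (l1 + l2 - J) = \<alpha> * real_of_int l1 + \<alpha> * real_of_int l2 - \<alpha> * real_of_int J"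
      by (simp add: algebra_simps)
    have an: "\<alpha> * real n \<ge> 0" using al by simp
    show False
    proof (rule arB)
      show "\<alpha> * real_of_int (l1 + l2 - J) + real k1 + real k2 < real I" using gt by simp
      show "real I + real m - real i \<le> \<alpha> * real_of_int (l2 - (J-j+int n)) + real k2" using e2 r2 by simp
      show "\<alpha> * real_of_int (l2 - (J-j+int n)) = \<alpha> * real_of_int (l1 + l2 - J) - \<alpha> * real_of_int (l1 - j) - \<alpha> * real n"
        by (simp add: algebra_simps)
    qed (use e1 an in auto)
  qed
qed

lemma gd:
  assumes "is_gamma_ord P k l" "P i j x \<noteq> 0"
  shows "j \<le> l \<and> (j = l \<longrightarrow> i \<le> k)"
  using assms unfolding is_gamma_ord_def by (metis not_le)

lemma ser_deriv_00: "ser_deriv 0 0 f = f"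
  by (auto simp: ser_deriv_def fun_eq_iff)

lemma prodG:
  fixes P Q :: "'k::field_char_0 op"
  assumes G1: "is_gamma_ord P k1 l1" and G2: "is_gamma_ord Q k2 l2"
  shows "is_gamma_ord (op_mult P Q) (k1+k2) (l1+l2)"
proof -
  have top: "J = l1 + l2 \<and> j = l1 \<and> n = 0 \<and> i \<le> k1 \<and> I+m-i \<le> k2"
    if "J \<ge> l1 + l2" "P i j (c,d) \<noteq> 0" "Q (I+m-i) (J-j+int n) y \<noteq> 0" for I J i m j n c d y
  proof -
    have "j \<le> l1" "J - j + int n \<le> l2" using gd[OF G1 that(2)] gd[OF G2 that(3)] by auto
    then have jn: "j = l1" "n = 0" "J = l1 + l2" using that(1) by auto
    then show ?thesis using gd[OF G1 that(2)] gd[OF G2 that(3)] by auto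
  qed
  have A: "op_mult P Q I J = (\<lambda>_. 0)" if "J > l1 + l2" for I J
  proof (rule ext, rule ccontr)
    fix x assume nz: "op_mult P Q I J x \<noteq> 0"
    obtain a b where xab: "x = (a,b)" by (cases x)
    from nz[unfolded xab] obtain i m j n c d where "m \<le> i" "i - m \<le> I" "c \<le> a" "d \<le> b" and h: "P i j (c,d) \<noteq> 0"
       "Q (I+m-i) (J-j+int n) (a-c+m, b-d+n) \<noteq> 0" by (rule op_nz)
    show False using top[OF _ h] that by auto
  qed
  have B: "op_mult P Q I (l1+l2) = (\<lambda>_. 0)" if "I > k1 + k2" for I
  proof (rule ext, rule ccontr)
    fix x assume nz: "op_mult P Q I (l1+l2) x \<noteq> 0"
    obtain a b where xab: "x = (a,b)" by (cases x)
    from nz[unfolded xab] obtain i m j n c d where h: "m \<le> i" "i - m \<le> I" "c \<le> a" "d \<le> b" "P i j (c,d) \<noteq> 0"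
       "Q (I+m-i) (l1+l2-j+int n) (a-c+m, b-d+n) \<noteq> 0" by (rule op_nz)
    show False using top[OF _ h(5,6)] that h(1,2) by auto
  qed
  have P0: "P k1 l1 \<noteq> (\<lambda>_. 0)" "Q k2 l2 \<noteq> (\<lambda>_. 0)" using G1 G2 unfolding is_gamma_ord_def by auto
  obtain x where x: "ser_mult (P k1 l1) (Q k2 l2) x \<noteq> 0" using ser_mult_nz[OF P0] by blast
  obtain a b where xab: "x = (a,b)" by (cases x)
  let ?t0 = "(k1, 0::nat, l1, 0::nat)"
  let ?F = "mterm P Q (k1+k2) (l1+l2)"
  have F0: "?F ?t0 x = ser_mult (P k1 l1) (Q k2 l2) x"
    by (simp add: mterm_def ser_deriv_00)
  have S: "{t. ?F t x \<noteq> 0} = {?t0}"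
  proof (intro equalityI subsetI)
    fix t assume "t \<in> {t. ?F t x \<noteq> 0}"
    then have t: "?F t (a,b) \<noteq> 0" using xab by simp
    obtain i m j n where tt: "t = (i,m,j,n)" by (cases t) auto
    from term_nz[OF t[unfolded tt]] obtain c d where h: "m \<le> i" "i - m \<le> k1+k2" "P i j (c,d) \<noteq> 0"
       "Q (k1+k2+m-i) (l1+l2-j+int n) (a-c+m, b-d+n) \<noteq> 0" by blast
    from top[OF _ h(3,4)] h(1,2) have "j = l1" "n = 0" "i = k1" "m = 0" by auto
    then show "t \<in> {?t0}" using tt by simp
  next
    fix t assume "t \<in> {?t0}" then show "t \<in> {t. ?F t x \<noteq> 0}" using F0 x by simp
  qed
  have "op_mult P Q (k1+k2) (l1+l2) x = ?F ?t0 x"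
    unfolding op_mult_eq ser_sum_def S by simp
  then have "op_mult P Q (k1+k2) (l1+l2) \<noteq> (\<lambda>_. 0)" using F0 x by auto
  then show ?thesis unfolding is_gamma_ord_def using A B by auto
qed


theorem lemma9:
  fixes \<alpha> :: real
  assumes "\<alpha> \<ge> 1"
  shows
   "(\<forall>(P1 :: 'k::field_char_0 op) P2 k1 l1 k2 l2.
       hatE P1 \<and> hatE P2 \<and> condA \<alpha> P1 k1 l1 \<and> condA \<alpha> P2 k2 l2 \<longrightarrow>
       condA \<alpha> (op_mult P1 P2) (k1 + k2) (l1 + l2))
  \<and> (\<forall>(P1 :: 'k op) P2 k1 l1 k2 l2.
       hatE P1 \<and> hatE P2 \<and> is_gamma_ord P1 k1 l1 \<and> condA \<alpha> P1 k1 l1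
       \<and> is_gamma_ord P2 k2 l2 \<and> condA \<alpha> P2 k2 l2 \<longrightarrow>
       is_gamma_ord (op_mult P1 P2) (k1 + k2) (l1 + l2)
       \<and> condA \<alpha> (op_mult P1 P2) (k1 + k2) (l1 + l2))
  \<and> (\<forall>(P1 :: 'k op) P2 k1 l1 k2 l2.
       Eplus P1 \<and> Eplus P2 \<and> condB \<alpha> P1 k1 l1 \<and> condB \<alpha> P2 k2 l2 \<longrightarrow>
       condB \<alpha> (op_mult P1 P2) (k1 + k2) (l1 + l2))
  \<and> (\<forall>(P1 :: 'k op) P2 k1 l1 k2 l2.
       Eplus P1 \<and> Eplus P2 \<and> is_gamma_ord P1 k1 l1 \<and> condB \<alpha> P1 k1 l1
       \<and> is_gamma_ord P2 k2 l2 \<and> condB \<alpha> P2 k2 l2 \<longrightarrow>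
       is_gamma_ord (op_mult P1 P2) (k1 + k2) (l1 + l2)
       \<and> condB \<alpha> (op_mult P1 P2) (k1 + k2) (l1 + l2))"
  using prodA[OF assms] prodB[OF assms] prodG by blast

end
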